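(* Let $(\mathcal T(n))_{n\in\mathbb N}$ be the triangle Markov chain obtained by iterated random barycentric subdivision, $J_n=J(\mathcal T(n))$, and $\mathcal T_n$ the $\sigma$-algebra generated by $\mathcal T(0),\dots,\mathcal T(n)$. Then for every $n\in\mathbb N$, $$\mathbb E[J_{n+1}\mid\mathcal T_n]=\frac43 J_n .$$
   Context: A triangle is given by three points of the plane which are not all equal. Barycentric subdivision: if a triangle has vertices $A,B,C$, let $D,E,F$ be the midpoints of $[A,B],[B,C],[C,A]$ and $G$ its barycenter; the medians cut it into the six triangles $\{A,D,G\},\{D,B,G\},\{B,E,G\},\{E,C,G\},\{C,F,G\},\{F,A,G\}$. The triangle Markov chain: $\mathcal T(0)$ is given and $\mathcal T(n+1)$ is chosen uniformly among the six triangles of the barycentric subdivision of $\mathcal T(n)$, independently of the past. For a triangle $\mathcal T$, $J(\mathcal T)\in(0,+\infty]$ is the sum of the squares of the lengths of its edges divided by its area ($J=+\infty$ for flat, i.e. zero-area, triangles). *)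

theory Defs
  imports "HOL-Probability.Probability"
begin

type_synonym triangle = "complex \<times> complex \<times> complex"

definition nondeg :: "triangle \<Rightarrow> bool" where
  "nondeg t = (case t of (A, B, C) \<Rightarrow> \<not> (A = B \<and> B = C))"

definition area :: "triangle \<Rightarrow> real" where
  "area t = (case t of (A, B, C) \<Rightarrow>
     \<bar>Re (B - A) * Im (C - A) - Im (B - A) * Re (C - A)\<bar> / 2)"

definition edge_sq_sum :: "triangle \<Rightarrow> real" where
  "edge_sq_sum t = (case t of (A, B, C) \<Rightarrow>
     (cmod (B - A))\<^sup>2 + (cmod (C - B))\<^sup>2 + (cmod (A - C))\<^sup>2)"

definition J :: "triangle \<Rightarrow> ennreal" where
  "J t = (if area t = 0 then \<infinity> else ennreal (edge_sq_sum t / area t))"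

definition subdiv :: "triangle \<Rightarrow> triangle list" where
  "subdiv t = (case t of (A, B, C) \<Rightarrow>
     (let D = (A + B) / 2; E = (B + C) / 2; F = (C + A) / 2; G = (A + B + C) / 3
      in [(A, D, G), (D, B, G), (B, E, G), (E, C, G), (C, F, G), (F, A, G)]))"

definition nat_filt :: "'w measure \<Rightarrow> (nat \<Rightarrow> 'w \<Rightarrow> triangle) \<Rightarrow> nat \<Rightarrow> 'w measure" where
  "nat_filt M T n = sigma (space M)
     {T i -` B \<inter> space M | i B. i \<le> n \<and> B \<in> sets (borel :: triangle measure)}"

text \<open>T is the triangle Markov chain on the probability space M:
  T (n+1) is uniform among the six subtriangles of T n, independently of
  T 0, ..., T n.\<close>
definition triangle_chain :: "'w measure \<Rightarrow> (nat \<Rightarrow> 'w \<Rightarrow> triangle) \<Rightarrow> bool" where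
  "triangle_chain M T \<longleftrightarrow>
     prob_space M \<and>
     (\<forall>n. T n \<in> M \<rightarrow>\<^sub>M borel) \<and>
     (\<forall>x\<in>space M. nondeg (T 0 x)) \<and>
     (\<forall>n A B. A \<in> sets (nat_filt M T n) \<longrightarrow> B \<in> sets (borel :: triangle measure) \<longrightarrow>
        emeasure M (A \<inter> {x \<in> space M. T (Suc n) x \<in> B}) =
        (\<integral>\<^sup>+ x. indicator A x *
            ennreal (real (length (filter (\<lambda>c. c \<in> B) (subdiv (T n x)))) / 6) \<partial>M))"

end

theory Submission imports Defs begin

definition sb :: "nat \<Rightarrow> triangle \<Rightarrow> triangle" where "sb i t = subdiv t ! (i mod 6)"

lemma length_subdiv[simp]: "length (subdiv t) = 6"
  by (cases t) (simp add: subdiv_def Let_def)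

lemma absfact: "(x::real) = c * y \<Longrightarrow> 0 \<le> c \<Longrightarrow> \<bar>x\<bar> = c * \<bar>y\<bar>"
  by (simp add: abs_mult)

lemma six_cases: "(i::nat) < 6 \<Longrightarrow> i = 0 \<or> i = 1 \<or> i = 2 \<or> i = 3 \<or> i = 4 \<or> i = 5"
  by auto

lemma sum6: "(\<Sum>i<(6::nat). f i) = f 0 + f 1 + f 2 + f 3 + f 4 + (f 5 :: 'a::comm_monoid_add)"
  by (simp add: eval_nat_numeral add.assoc)

lemma sb_vals:
  "sb 0 (A,B,C) = (A, (A+B)/2, (A+B+C)/3)"
  "sb 1 (A,B,C) = ((A+B)/2, B, (A+B+C)/3)"
  "sb 2 (A,B,C) = (B, (B+C)/2, (A+B+C)/3)"
  "sb 3 (A,B,C) = ((B+C)/2, C, (A+B+C)/3)"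
  "sb 4 (A,B,C) = (C, (C+A)/2, (A+B+C)/3)"
  "sb 5 (A,B,C) = ((C+A)/2, A, (A+B+C)/3)"
  by (simp_all add: sb_def subdiv_def Let_def)

lemma area_sb: "i < 6 \<Longrightarrow> area (sb i t) = area t / 6"
proof -
  assume i: "i < 6"
  obtain A B C where t: "t = (A,B,C)" by (cases t)
  from six_cases[OF i] show ?thesis
    unfolding t
    by (elim disjE) (simp_all only: sb_vals; simp add: area_def field_simps; rule absfact; simp add: algebra_simps)+
qed

lemma edge_sb: "(\<Sum>i<6. edge_sq_sum (sb i t)) = 4/3 * edge_sq_sum t"
proof -
  obtain A B C where t: "t = (A,B,C)" by (cases t)
  show ?thesis
    unfolding t sum6 sb_vals edge_sq_sum_def case_prod_conv cmod_power2
    by (simp add: power2_eq_square field_simps)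
qed


lemma edge_nonneg: "edge_sq_sum t \<ge> 0"
  by (cases t) (simp add: edge_sq_sum_def)

lemma area_nonneg: "area t \<ge> 0"
  by (cases t) (simp add: area_def)

lemma J_sum: "(\<Sum>i<6. J (sb i t)) = 8 * J t"
proof (cases "area t = 0")
  case True
  then have "J (sb i t) = \<infinity>" if "i < 6" for i using area_sb[OF that, of t] True by (simp add: J_def)
  then show ?thesis using True by (simp add: sum6 J_def)
next
  case False
  then have a: "area t > 0" using area_nonneg[of t] by linarith
  have "(\<Sum>i<6. J (sb i t)) = (\<Sum>i<6. ennreal (6 / area t * edge_sq_sum (sb i t)))"
    using a by (intro sum.cong) (auto simp: J_def area_sb field_simps)
  also have "\<dots> = ennreal (\<Sum>i<6. 6 / area t * edge_sq_sum (sb i t))"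
    using a edge_nonneg by (intro sum_ennreal) auto
  also have "(\<Sum>i<6. 6 / area t * edge_sq_sum (sb i t)) = 8 * (edge_sq_sum t / area t)"
    unfolding sum_distrib_left[symmetric] edge_sb by simp
  also have "ennreal (8 * (edge_sq_sum t / area t)) = 8 * J t"
    using False a edge_nonneg[of t] ennreal_mult[of 8 "edge_sq_sum t / area t"] by (simp add: J_def)
  finally show ?thesis .
qed

lemma area_alt: "area t = \<bar>Re (fst (snd t) - fst t) * Im (snd (snd t) - fst t) - Im (fst (snd t) - fst t) * Re (snd (snd t) - fst t)\<bar> / 2"
  by (cases t) (simp add: area_def)

lemma edge_alt: "edge_sq_sum t = (cmod (fst (snd t) - fst t))\<^sup>2 + (cmod (snd (snd t) - fst (snd t)))\<^sup>2 + (cmod (fst t - snd (snd t)))\<^sup>2"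
  by (cases t) (simp add: edge_sq_sum_def)

lemma area_meas[measurable]: "area \<in> borel_measurable borel"
  unfolding area_alt[abs_def] by (intro borel_measurable_continuous_onI continuous_intros | simp)+

lemma edge_meas[measurable]: "edge_sq_sum \<in> borel_measurable borel"
  unfolding edge_alt[abs_def] by (intro borel_measurable_continuous_onI continuous_intros | simp)+

lemma J_meas[measurable]: "J \<in> borel_measurable borel"
  unfolding J_def[abs_def] by measurable

lemma sb_meas[measurable]: "sb i \<in> borel_measurable borel"
proof -
  have "i mod 6 < 6" by simp
  from six_cases[OF this] have "sb i = (\<lambda>t. (fst t, (fst t + fst (snd t))/2, (fst t + fst (snd t) + snd (snd t))/3))
    \<or> sb i = (\<lambda>t. ((fst t + fst (snd t))/2, fst (snd t), (fst t + fst (snd t) + snd (snd t))/3))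
    \<or> sb i = (\<lambda>t. (fst (snd t), (fst (snd t) + snd (snd t))/2, (fst t + fst (snd t) + snd (snd t))/3))
    \<or> sb i = (\<lambda>t. ((fst (snd t) + snd (snd t))/2, snd (snd t), (fst t + fst (snd t) + snd (snd t))/3))
    \<or> sb i = (\<lambda>t. (snd (snd t), (snd (snd t) + fst t)/2, (fst t + fst (snd t) + snd (snd t))/3))
    \<or> sb i = (\<lambda>t. ((snd (snd t) + fst t)/2, fst t, (fst t + fst (snd t) + snd (snd t))/3))"
    by (elim disjE) (auto intro!: ext simp: sb_def subdiv_def Let_def split: prod.splits)
  then show ?thesis
    by (elim disjE; simp only:; intro borel_measurable_continuous_onI continuous_intros; simp)
qed


lemma sum_indicator_list: "(\<Sum>i<length L. indicator B (L!i) :: ennreal) = of_nat (length (filter (\<lambda>c. c \<in> B) L))"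
proof (induction L)
  case (Cons a L)
  have "(\<Sum>i<length (a # L). indicator B ((a # L) ! i) :: ennreal) = indicator B a + (\<Sum>i<length L. indicator B (L ! i))"
    by (simp only: length_Cons sum.lessThan_Suc_shift nth_Cons_0 nth_Cons_Suc)
  then show ?case using Cons.IH by (auto split: split_indicator)
qed simp

lemma cnt: "ennreal (real (length (filter (\<lambda>c. c \<in> B) (subdiv t))) / 6) = (\<Sum>i<6. indicator B (sb i t)) / 6"
proof -
  have "(\<Sum>i<6. indicator B (sb i t) :: ennreal) = (\<Sum>i<length (subdiv t). indicator B (subdiv t ! i))"
    by (intro sum.cong) (auto simp: sb_def)
  also have "\<dots> = of_nat (length (filter (\<lambda>c. c \<in> B) (subdiv t)))" by (rule sum_indicator_list)
  finally show ?thesis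
    by (simp add: ennreal_of_nat_eq_real_of_nat divide_ennreal[symmetric])
qed

lemma nf_space: "space (nat_filt M T n) = space M"
  by (simp add: nat_filt_def space_measure_of_conv)

lemma nf_sets: "sets (nat_filt M T n) = sigma_sets (space M) {T i -` B \<inter> space M | i B. i \<le> n \<and> B \<in> sets (borel :: triangle measure)}"
  unfolding nat_filt_def by (rule sets_measure_of) auto

lemma nf_sub:
  assumes "\<And>i. T i \<in> M \<rightarrow>\<^sub>M borel"
  shows "subalgebra M (nat_filt M T n)"
  unfolding subalgebra_def nf_space nf_sets
  by (auto intro!: sets.sigma_sets_subset measurable_sets assms)

lemma nf_meas:
  shows "T n \<in> nat_filt M T n \<rightarrow>\<^sub>M borel"
proof (rule measurableI)
  fix x assume "x \<in> space (nat_filt M T n)"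
  then show "T n x \<in> space borel" by simp
next
  fix B :: "triangle set" assume "B \<in> sets borel"
  then show "T n -` B \<inter> space (nat_filt M T n) \<in> sets (nat_filt M T n)"
    unfolding nf_space nf_sets by (intro sigma_sets.Basic) auto
qed


lemma ennr_arith: "ennreal (1/6) * 6 = 1" "ennreal (1/6) * 8 = ennreal (4/3)"
  by (simp_all add: ennreal_mult[symmetric] ennreal_numeral[symmetric] del: ennreal_numeral)

lemma ennr6: "6 * ((a::ennreal) * (S / 6)) = a * S"
proof -
  have "6 * (S / 6) = S" by (simp add: ennreal_times_divide mult.commute[of 6 S] ennreal_mult_divide_eq)
  then show ?thesis by (metis mult.left_commute)
qed

theorem lemma5:
  fixes M :: "'w measure" and T :: "nat \<Rightarrow> 'w \<Rightarrow> triangle" and n :: nat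
  assumes "triangle_chain M T"
  shows "AE x in M. nn_cond_exp M (nat_filt M T n) (\<lambda>y. J (T (Suc n) y)) x
                    = ennreal (4/3) * J (T n x)"
proof -
  have ps: "prob_space M" and Tm[measurable]: "\<And>i. T i \<in> M \<rightarrow>\<^sub>M borel"
    and key: "\<And>n A B. A \<in> sets (nat_filt M T n) \<Longrightarrow> B \<in> sets (borel :: triangle measure) \<Longrightarrow>
        emeasure M (A \<inter> {x \<in> space M. T (Suc n) x \<in> B}) =
        (\<integral>\<^sup>+ x. indicator A x *
            ennreal (real (length (filter (\<lambda>c. c \<in> B) (subdiv (T n x)))) / 6) \<partial>M)"
    using assms unfolding triangle_chain_def by auto
  interpret prob_space M by (rule ps)
  define F where "F = nat_filt M T n"
  have sub: "subalgebra M F" unfolding F_def by (rule nf_sub[OF Tm])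
  have Fm[measurable]: "T n \<in> F \<rightarrow>\<^sub>M borel" unfolding F_def by (rule nf_meas)
  have "finite_measure_subalgebra M F"
    unfolding finite_measure_subalgebra_def finite_measure_subalgebra_axioms_def
    using sub finite_measure_axioms by auto
  then interpret fs: sigma_finite_subalgebra M F
    by (rule finite_measure_subalgebra_is_sigma_finite)
  have A_in_M: "\<And>A. A \<in> sets F \<Longrightarrow> A \<in> sets M" using sub by (auto simp: subalgebra_def)
  have main: "6 * (\<integral>\<^sup>+x. indicator A x * f (T (Suc n) x) \<partial>M) = (\<integral>\<^sup>+x. indicator A x * (\<Sum>i<6. f (sb i (T n x))) \<partial>M)"
    if A: "A \<in> sets F" and f: "f \<in> borel_measurable borel" for A and f :: "triangle \<Rightarrow> ennreal"
  proof -
    have [measurable]: "A \<in> sets M" using A_in_M[OF A] .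
    from f show ?thesis
    proof (induction rule: borel_measurable_induct)
      case (cong f g)
      then have "f = g" by auto
      then show ?case using cong by simp
    next
      case (set B)
      note [measurable] = set
      have "(\<integral>\<^sup>+x. indicator A x * indicator B (T (Suc n) x) \<partial>M) = (\<integral>\<^sup>+x. indicator (A \<inter> {x\<in>space M. T (Suc n) x \<in> B}) x \<partial>M)"
        by (intro nn_integral_cong) (auto split: split_indicator)
      also have "\<dots> = emeasure M (A \<inter> {x\<in>space M. T (Suc n) x \<in> B})"
        by (intro nn_integral_indicator) measurable
      also have "\<dots> = (\<integral>\<^sup>+x. indicator A x * ((\<Sum>i<6. indicator B (sb i (T n x))) / 6) \<partial>M)"
        using key[of A n B] A set by (simp add: F_def cnt)
      finally have "6 * (\<integral>\<^sup>+x. indicator A x * indicator B (T (Suc n) x) \<partial>M) = 6 * (\<integral>\<^sup>+x. indicator A x * ((\<Sum>i<6. indicator B (sb i (T n x))) / 6) \<partial>M)"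
        by simp
      also have "\<dots> = (\<integral>\<^sup>+x. 6 * (indicator A x * ((\<Sum>i<6. indicator B (sb i (T n x))) / 6)) \<partial>M)"
        by (rule nn_integral_cmult[symmetric]) measurable
      also have "\<dots> = (\<integral>\<^sup>+x. indicator A x * (\<Sum>i<6. indicator B (sb i (T n x))) \<partial>M)"
        by (simp only: ennr6)
      finally show ?case .
    next
      case (mult u c)
      note [measurable] = mult(2)
      have "(\<integral>\<^sup>+x. indicator A x * (c * u (T (Suc n) x)) \<partial>M) = (\<integral>\<^sup>+x. c * (indicator A x * u (T (Suc n) x)) \<partial>M)"
        by (simp add: ac_simps)
      also have "\<dots> = c * (\<integral>\<^sup>+x. indicator A x * u (T (Suc n) x) \<partial>M)"
        by (rule nn_integral_cmult) measurable
      finally have "6 * (\<integral>\<^sup>+x. indicator A x * (c * u (T (Suc n) x)) \<partial>M) = c * (6 * (\<integral>\<^sup>+x. indicator A x * u (T (Suc n) x) \<partial>M))"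
        by (simp add: ac_simps)
      also have "\<dots> = c * (\<integral>\<^sup>+x. indicator A x * (\<Sum>i<6. u (sb i (T n x))) \<partial>M)"
        using mult(4) by simp
      also have "\<dots> = (\<integral>\<^sup>+x. c * (indicator A x * (\<Sum>i<6. u (sb i (T n x)))) \<partial>M)"
        by (rule nn_integral_cmult[symmetric]) measurable
      also have "\<dots> = (\<integral>\<^sup>+x. indicator A x * (\<Sum>i<6. c * u (sb i (T n x))) \<partial>M)"
        by (intro nn_integral_cong) (simp only: sum_distrib_left mult.left_commute)
      finally show ?case .
    next
      case (add u v)
      have [measurable]: "u \<in> borel_measurable borel" "v \<in> borel_measurable borel" using add by auto
      have "(\<integral>\<^sup>+x. indicator A x * (v (T (Suc n) x) + u (T (Suc n) x)) \<partial>M)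
          = (\<integral>\<^sup>+x. indicator A x * v (T (Suc n) x) + indicator A x * u (T (Suc n) x) \<partial>M)"
        by (simp add: distrib_left)
      also have "\<dots> = (\<integral>\<^sup>+x. indicator A x * v (T (Suc n) x) \<partial>M) + (\<integral>\<^sup>+x. indicator A x * u (T (Suc n) x) \<partial>M)"
        by (rule nn_integral_add) measurable
      finally have "6 * (\<integral>\<^sup>+x. indicator A x * (v (T (Suc n) x) + u (T (Suc n) x)) \<partial>M)
          = 6 * (\<integral>\<^sup>+x. indicator A x * v (T (Suc n) x) \<partial>M) + 6 * (\<integral>\<^sup>+x. indicator A x * u (T (Suc n) x) \<partial>M)"
        by (simp add: distrib_left)
      also have "\<dots> = (\<integral>\<^sup>+x. indicator A x * (\<Sum>i<6. v (sb i (T n x))) \<partial>M) + (\<integral>\<^sup>+x. indicator A x * (\<Sum>i<6. u (sb i (T n x))) \<partial>M)"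
        using add by simp
      also have "\<dots> = (\<integral>\<^sup>+x. indicator A x * (\<Sum>i<6. v (sb i (T n x))) + indicator A x * (\<Sum>i<6. u (sb i (T n x))) \<partial>M)"
        by (rule nn_integral_add[symmetric]) measurable
      also have "\<dots> = (\<integral>\<^sup>+x. indicator A x * (\<Sum>i<6. v (sb i (T n x)) + u (sb i (T n x))) \<partial>M)"
        by (simp add: distrib_left sum.distrib)
      finally show ?case .
    next
      case (seq U)
      have [measurable]: "\<And>i. U i \<in> borel_measurable borel" using seq by auto
      have mono: "U a y \<le> U b y" if "a \<le> b" for a b y
      proof -
        have "incseq U" using seq by blast
        then have "U a \<le> U b" using that by (simp add: incseq_def)
        then show ?thesis by (rule le_funD)
      qed
      have inc1: "incseq (\<lambda>i x. indicator A x * U i (T (Suc n) x))"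
        by (auto simp: incseq_def le_fun_def intro!: mult_left_mono mono)
      have inc2: "incseq (\<lambda>i x. indicator A x * (\<Sum>k<6. U i (sb k (T n x))))"
        by (auto simp: incseq_def le_fun_def intro!: mult_left_mono sum_mono mono)
      have m1: "(\<lambda>x. indicator A x * U i (T (Suc n) x)) \<in> borel_measurable M" for i by measurable
      have m2: "(\<lambda>x. indicator A x * (\<Sum>k<6. U i (sb k (T n x)))) \<in> borel_measurable M" for i by measurable
      have "6 * (\<integral>\<^sup>+x. indicator A x * (SUP i. U i) (T (Suc n) x) \<partial>M)
          = 6 * (\<integral>\<^sup>+x. (SUP i. indicator A x * U i (T (Suc n) x)) \<partial>M)"
        by (simp add: SUP_mult_left_ennreal image_comp)
      also have "\<dots> = 6 * (SUP i. (\<integral>\<^sup>+x. indicator A x * U i (T (Suc n) x) \<partial>M))"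
        using nn_integral_monotone_convergence_SUP[OF inc1 m1] by simp
      also have "\<dots> = (SUP i. 6 * (\<integral>\<^sup>+x. indicator A x * U i (T (Suc n) x) \<partial>M))"
        by (simp add: SUP_mult_left_ennreal)
      also have "\<dots> = (SUP i. (\<integral>\<^sup>+x. indicator A x * (\<Sum>k<6. U i (sb k (T n x))) \<partial>M))"
        using seq by simp
      also have "\<dots> = (\<integral>\<^sup>+x. (SUP i. indicator A x * (\<Sum>k<6. U i (sb k (T n x)))) \<partial>M)"
        using nn_integral_monotone_convergence_SUP[OF inc2 m2] by simp
      also have "\<dots> = (\<integral>\<^sup>+x. indicator A x * (\<Sum>k<6. (SUP i. U i) (sb k (T n x))) \<partial>M)"
      proof (intro nn_integral_cong)
        fix x
        have "(\<Sum>k<6. (SUP i. U i) (sb k (T n x))) = (\<Sum>k<6. (SUP i. U i (sb k (T n x))))"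
          by (simp add: image_comp)
        also have "\<dots> = (SUP i. \<Sum>k<6. U i (sb k (T n x)))"
          by (rule ennreal_SUP_sum[symmetric]) (auto simp: incseq_def intro!: mono)
        finally show "(SUP i. indicator A x * (\<Sum>k<6. U i (sb k (T n x)))) = indicator A x * (\<Sum>k<6. (SUP i. U i) (sb k (T n x)))"
          by (simp add: SUP_mult_left_ennreal)
      qed
      finally show ?case .
    qed
  qed
  have eqA: "(\<integral>\<^sup>+x\<in>A. J (T (Suc n) x) \<partial>M) = (\<integral>\<^sup>+x\<in>A. ennreal (4/3) * J (T n x) \<partial>M)"
    if A: "A \<in> sets F" for A
  proof -
    have [measurable]: "A \<in> sets M" using A_in_M[OF A] .
    define X where "X = (\<integral>\<^sup>+x. indicator A x * J (T (Suc n) x) \<partial>M)"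
    define Y where "Y = (\<integral>\<^sup>+x. indicator A x * J (T n x) \<partial>M)"
    have "6 * X = (\<integral>\<^sup>+x. indicator A x * (\<Sum>i<6. J (sb i (T n x))) \<partial>M)"
      unfolding X_def by (rule main[OF A J_meas])
    also have "\<dots> = (\<integral>\<^sup>+x. 8 * (indicator A x * J (T n x)) \<partial>M)"
      by (simp add: J_sum ac_simps)
    also have "\<dots> = 8 * Y" unfolding Y_def by (rule nn_integral_cmult) measurable
    finally have 68: "6 * X = 8 * Y" .
    have "X = ennreal (1/6) * (6 * X)" by (simp add: mult.assoc[symmetric] ennr_arith)
    also have "\<dots> = ennreal (4/3) * Y" by (simp add: 68 mult.assoc[symmetric] ennr_arith)
    finally have "X = ennreal (4/3) * Y" .
    moreover have "(\<integral>\<^sup>+x\<in>A. ennreal (4/3) * J (T n x) \<partial>M) = ennreal (4/3) * Y"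
      unfolding Y_def by (subst nn_integral_cmult[symmetric]) (measurable, simp add: ac_simps)
    moreover have "(\<integral>\<^sup>+x\<in>A. J (T (Suc n) x) \<partial>M) = X"
      unfolding X_def by (simp add: ac_simps)
    ultimately show ?thesis by simp
  qed
  have "AE x in M. ennreal (4/3) * J (T n x) = nn_cond_exp M F (\<lambda>y. J (T (Suc n) y)) x"
    by (rule fs.nn_cond_exp_charact) (use eqA in auto)
  then show ?thesis unfolding F_def by (rule eventually_mono) simp
qed

end
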